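(* Let $f>0$, $F>0$, $s\in(0,1]$ with $f+sF>1$, let $0<\Delta<F$, and let $\pi_1\in(0,1)$. Consider the two-class stochastic Leslie model with two environments, $\boldsymbol A_1=\begin{pmatrix} f&F\\ s&0\end{pmatrix}$, $\boldsymbol A_2=\begin{pmatrix} f&F-\Delta\\ s&0\end{pmatrix}$, driven by an i.i.d. environmental sequence with $P(\tau_t=1)=\pi_1$, $P(\tau_t=2)=1-\pi_1$. Then $$\log\lambda_S\ \ge\ \log\rho(\boldsymbol A_1)+(1-\pi_1)\log\Big(1-\frac{\Delta}{F}\Big),$$ and consequently, if $$\Delta<F\Big(1-\rho(\boldsymbol A_1)^{\frac{1}{\pi_1-1}}\Big),\qquad \rho(\boldsymbol A_1)=\frac{f+\sqrt{f^2+4sF}}{2},$$ then $\lambda_S>1$, so the total population tends to infinity with probability one.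
   Context: The stochastic growth rate $\lambda_S$ of $\boldsymbol z(t+1)=\boldsymbol A_{\tau_{t+1}}\boldsymbol z(t)$ (with fixed nonzero $\boldsymbol z(0)\ge0$) is defined by $\log\lambda_S=\lim_{t\to\infty}\frac1t\log\|\boldsymbol z(t)\|_1$ almost surely; $\rho$ denotes spectral radius. *)

theory Defs
  imports "HOL-Probability.Probability"
begin

definition leslie2 :: "real \<Rightarrow> real \<Rightarrow> real \<Rightarrow> real^2^2" where
  "leslie2 f F s = vector [vector [f, F], vector [s, 0]]"

definition spec_rad :: "real^'n^'n \<Rightarrow> real" where
  "spec_rad A = Sup {cmod c | c. \<exists>v::complex^'n. v \<noteq> 0 \<and>
      (\<chi> i j. complex_of_real (A$i$j)) *v v = c *s v}"

definition norm1 :: "real^'n \<Rightarrow> real" where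
  "norm1 z = (\<Sum>i\<in>UNIV. \<bar>z$i\<bar>)"

primrec pop :: "(nat \<Rightarrow> real^'n^'n) \<Rightarrow> (nat \<Rightarrow> 'w \<Rightarrow> nat) \<Rightarrow> real^'n \<Rightarrow> nat \<Rightarrow> 'w \<Rightarrow> real^'n" where
  "pop Aenv \<tau> z0 0 \<omega> = z0"
| "pop Aenv \<tau> z0 (Suc t) \<omega> = Aenv (\<tau> (Suc t) \<omega>) *v pop Aenv \<tau> z0 t \<omega>"

definition log_stoch_growth :: "'w measure \<Rightarrow> (nat \<Rightarrow> real^'n^'n) \<Rightarrow> (nat \<Rightarrow> 'w \<Rightarrow> nat) \<Rightarrow> real^'n \<Rightarrow> real" where
  "log_stoch_growth M Aenv \<tau> z0 = (THE L. AE \<omega> in M.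
      (\<lambda>t. ln (norm1 (pop Aenv \<tau> z0 t \<omega>)) / real t) \<longlonglongrightarrow> L)"

end

theory Submission
  imports Defs
begin


lemma leslie_mult1: "(leslie2 a b c *v z) $ 1 = a * z$1 + b * z$2"
  by (simp add: leslie2_def matrix_vector_mult_def sum_2)
lemma leslie_mult2: "(leslie2 a b c *v z) $ 2 = c * z$1"
  by (simp add: leslie2_def matrix_vector_mult_def sum_2)

lemma leslie_entries: "leslie2 a b c $ 1 $ 1 = a" "leslie2 a b c $ 1 $ 2 = b"
   "leslie2 a b c $ 2 $ 1 = c" "leslie2 a b c $ 2 $ 2 = 0"
  by (simp_all add: leslie2_def)

lemma spec_rad_leslie:
  fixes f F s :: real
  assumes "f > 0" "F > 0" "s > 0"
  shows "spec_rad (leslie2 f F s) = (f + sqrt (f\<^sup>2 + 4 * s * F)) / 2"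
proof -
  define q where "q = sqrt (f\<^sup>2 + 4 * s * F)"
  define lp where "lp = (f + q) / 2"
  have nn: "f^2 + 4 * s * F > 0" using assms by (simp add: add_pos_pos)
  have qsq: "q^2 = f^2 + 4 * s * F" unfolding q_def using nn by simp
  have q0: "q \<ge> 0" unfolding q_def using nn by simp
  have "f^2 < q^2" using qsq assms by simp
  then have qpos: "q > f" using q0 by (rule power2_less_imp_less)
  let ?S = "{cmod c | c. \<exists>v::complex^2. v \<noteq> 0 \<and>
      (\<chi> i j. complex_of_real (leslie2 f F s$i$j)) *v v = c *s v}"
  have ev: "c\<^sup>2 = f * c + s * F" if "v \<noteq> 0" "(\<chi> i j. complex_of_real (leslie2 f F s$i$j)) *v v = c *s v" for c :: complex and v
  proof -
    have e1: "f * v$1 + F * v$2 = c * v$1" and e2: "s * v$1 = c * v$2"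
      using that(2)[THEN arg_cong[where f="\<lambda>w. w$1"]] that(2)[THEN arg_cong[where f="\<lambda>w. w$2"]]
      by (auto simp: matrix_vector_mult_def sum_2 leslie_entries)
    have "v$1 \<noteq> 0"
    proof
      assume h: "v$1 = 0"
      then have "v$2 = 0" using e1 assms by simp
      then have "v = 0" using h by (simp add: vec_eq_iff forall_2)
      then show False using that by simp
    qed
    have "c * (c * v$1) = c * (f * v$1 + F * v$2)" using e1 by simp
    also have "\<dots> = f * (c * v$1) + F * (c * v$2)" by (simp add: algebra_simps)
    also have "\<dots> = (f * c + s * F) * v$1" using e2[symmetric] by (simp add: algebra_simps)
    finally show ?thesis using \<open>v$1 \<noteq> 0\<close> by (simp add: power2_eq_square)
  qed
  have bound: "x \<le> lp" if "x \<in> ?S" for x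
  proof -
    obtain c v where x: "x = cmod c" "v \<noteq> 0" "(\<chi> i j. complex_of_real (leslie2 f F s$i$j)) *v v = c *s v"
      using \<open>x \<in> ?S\<close> by blast
    have eq: "c\<^sup>2 = f * c + s * F" by (rule ev[OF x(2,3)])
    have "(c - of_real lp) * (c - of_real ((f - q)/2)) = c^2 - f*c + of_real ((f^2 - q^2)/4)"
      unfolding lp_def by (simp add: algebra_simps power2_eq_square field_simps)
    also have "\<dots> = 0" using eq qsq by (simp add: algebra_simps)
    finally have "c = of_real lp \<or> c = of_real ((f - q)/2)" by simp
    moreover have "\<bar>lp\<bar> \<le> lp" "\<bar>(f - q)/2\<bar> \<le> lp" using qpos assms unfolding lp_def by auto
    ultimately show ?thesis using x(1) by (metis norm_of_real)
  qed
  have mem: "lp \<in> ?S"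
  proof -
    define v :: "complex^2" where "v = vector [of_real lp, of_real s]"
    have "v$2 \<noteq> 0" using assms by (simp add: v_def)
    then have "v \<noteq> 0" by auto
    have lpsq: "lp * lp = f * lp + s * F" unfolding lp_def using qsq
      by (simp add: algebra_simps power2_eq_square field_simps)
    have "(\<chi> i j. complex_of_real (leslie2 f F s$i$j)) *v v = of_real lp *s v"
      unfolding vec_eq_iff forall_2 using lpsq
      by (simp add: matrix_vector_mult_def sum_2 leslie_entries v_def algebra_simps flip: of_real_mult of_real_add)
    moreover have "lp > 0" using qpos assms unfolding lp_def by simp
    then have "lp = cmod (of_real lp)" by (simp only: norm_of_real abs_of_pos)
    ultimately show ?thesis using \<open>v \<noteq> 0\<close> by blast
  qed
  have "Sup ?S = lp"
    by (rule cSup_eq_maximum[OF mem]) (use bound in auto)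
  then show ?thesis unfolding spec_rad_def lp_def q_def .
qed


locale les =
  fixes f F s \<Delta> :: real
  assumes fpos: "f > 0" and Fpos: "F > 0" and spos: "s > 0" and Dpos: "\<Delta> > 0" and DF: "\<Delta> < F"
begin

definition Fk :: "nat \<Rightarrow> real" where "Fk a = (if a = 1 then F else F - \<Delta>)"
lemma Fk_pos: "Fk a > 0" and Fk_le: "Fk a \<le> F"
  using Fpos Dpos DF by (auto simp: Fk_def)

definition "fmax = f + s * F / f"
definition "phi a x = f + s * Fk a / x"
definition "theta = s * F / (f\<^sup>2 + s * F)"

lemma fmax_gt: "f < fmax"
  using fpos Fpos spos by (simp add: fmax_def)

lemma phi_bounds: assumes "f \<le> x" shows "f \<le> phi a x" "phi a x \<le> fmax"
proof -
  have x: "x > 0" using assms fpos by simp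
  have "s * Fk a / x \<ge> 0" using x spos Fk_pos[of a] by simp
  then show "f \<le> phi a x" by (simp add: phi_def)
  have "s * Fk a / x \<le> s * F / x" using x spos Fk_le[of a] by (simp add: divide_right_mono)
  also have "\<dots> \<le> s * F / f" using x spos Fpos assms fpos by (simp add: frac_le)
  finally show "phi a x \<le> fmax" by (simp add: phi_def fmax_def)
qed

lemma theta_bounds: "0 < theta" "theta < 1"
proof -
  have p: "s * F > 0" using spos Fpos by simp
  have q: "f\<^sup>2 + s * F > 0" using p fpos by (simp add: add_pos_pos)
  show "0 < theta" unfolding theta_def using p q by simp
  show "theta < 1" unfolding theta_def using p q fpos by (simp add: divide_less_eq)
qed

lemma frac_mono_aux: assumes "0 < c" "c \<le> d" "(e::real) > 0" shows "c / (e + c) \<le> d / (e + d)"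
proof -
  have "e + c > 0" "e + d > 0" using assms by auto
  moreover have "c * e \<le> d * e" using assms by (simp add: mult_right_mono)
  ultimately show ?thesis by (simp add: field_simps)
qed

lemma contraction_aux:
  assumes "f \<le> x" "x \<le> y"
  shows "ln (phi a x) + theta * ln x \<le> ln (phi a y) + theta * ln y"
proof -
  define c where "c = s * Fk a"
  have c: "c > 0" "c \<le> s * F" using spos Fk_pos[of a] Fk_le[of a] by (auto simp: c_def)
  define h where "h u = ln (f + c / u) + theta * ln u" for u
  have "h x \<le> h y"
  proof (rule DERIV_nonneg_imp_nondecreasing[OF assms(2)])
    fix u assume u: "x \<le> u" "u \<le> y"
    then have u0: "u > 0" and uf: "u \<ge> f" using assms fpos by auto
    have fc: "f + c / u > 0" using u0 c fpos by (intro add_pos_pos) auto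
    have D: "(h has_real_derivative ((- c / u^2) / (f + c / u) + theta * (1 / u))) (at u)"
      unfolding h_def using u0 fc
      by (auto intro!: derivative_eq_intros simp: power2_eq_square field_simps)
    have "c / (f * u + c) \<le> theta"
    proof -
      have fu: "f * f \<le> f * u" using uf fpos by (simp add: mult_left_mono)
      have p1: "f * f + c > 0" using fpos c by (intro add_pos_pos) auto
      have p2: "f * u + c > 0" using fpos c u0 by (intro add_pos_pos) auto
      have "c / (f * u + c) \<le> c / (f * f + c)"
        by (rule divide_left_mono) (use fu c p1 p2 in \<open>auto intro: mult_pos_pos\<close>)
      also have "\<dots> \<le> s * F / (f * f + s * F)"
        using c fpos by (intro frac_mono_aux) auto
      finally show ?thesis by (simp add: theta_def power2_eq_square)
    qed
    then have "c \<le> theta * (f * u + c)" using u0 fpos c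
      by (simp add: divide_le_eq add_pos_pos)
    moreover have "(- c / u^2) / (f + c / u) + theta * (1 / u) = (theta * (f * u + c) - c) / (u * (f * u + c))"
    proof -
      have p3: "f * u + c > 0" using fpos c u0 by (intro add_pos_pos) auto
      have e1: "f + c / u = (f * u + c) / u" using u0 by (simp add: field_simps)
      have e2: "(- c / u^2) / ((f * u + c) / u) = - c / (u * (f * u + c))"
        using u0 p3 by (simp add: field_simps power2_eq_square)
      have e4: "(theta * (f * u + c) - c) / (u * (f * u + c)) = theta * (f * u + c) / (u * (f * u + c)) - c / (u * (f * u + c))"
        by (rule diff_divide_distrib)
      have e5: "theta * (f * u + c) / (u * (f * u + c)) = theta * (1 / u)"
        using p3 by simp
      have e3: "- c / (u * (f * u + c)) + theta * (1 / u) = (theta * (f * u + c) - c) / (u * (f * u + c))"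
        unfolding e4 e5 by simp
      show ?thesis unfolding e1 e2 e3 ..
    qed
    ultimately have "(- c / u^2) / (f + c / u) + theta * (1 / u) \<ge> 0"
      using u0 c fpos by (simp add: add_pos_pos)
    then show "\<exists>y. (h has_real_derivative y) (at u) \<and> 0 \<le> y" using D by blast
  qed
  then show ?thesis by (simp add: h_def phi_def c_def)
qed

lemma phi_anti: assumes "f \<le> x" "x \<le> y" shows "phi a y \<le> phi a x"
  using assms fpos spos Fk_pos[of a] unfolding phi_def
  by (simp add: frac_le)

lemma contraction:
  assumes "f \<le> x" "f \<le> y"
  shows "\<bar>ln (phi a x) - ln (phi a y)\<bar> \<le> theta * \<bar>ln x - ln y\<bar>"
proof -
  have gen: "\<bar>ln (phi a x) - ln (phi a y)\<bar> \<le> theta * \<bar>ln x - ln y\<bar>" if "f \<le> x" "x \<le> y" for x y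
  proof -
    have x0: "x > 0" using that fpos by simp
    have "phi a y \<le> phi a x" by (rule phi_anti[OF that])
    moreover have "phi a y > 0" using phi_bounds(1)[of y a] that fpos by simp
    ultimately have "ln (phi a y) \<le> ln (phi a x)" by simp
    moreover have "ln x \<le> ln y" using that x0 by simp
    moreover have "ln (phi a x) - ln (phi a y) \<le> theta * ln y - theta * ln x"
      using contraction_aux[OF that, of a] by linarith
    ultimately show ?thesis using theta_bounds by (simp add: right_diff_distrib)
  qed
  show ?thesis
  proof (cases "x \<le> y")
    case True then show ?thesis using gen assms by blast
  next
    case False then show ?thesis using gen[of y x] assms by (simp add: abs_minus_commute)
  qed
qed

end


lemma aux_alg: "(n::real) > 0 \<Longrightarrow> K > 0 \<Longrightarrow> d > 0 \<Longrightarrow> - 2 * (n / K)\<^sup>2 / (n * d) = n * (- 2 / (K^2 * d))"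
  by (simp add: field_simps power2_eq_square)

lemma (in prob_space) slln_bounded:
  fixes X :: "nat \<Rightarrow> 'a \<Rightarrow> real"
  assumes ind: "indep_vars (\<lambda>_. borel) X UNIV"
    and bnd: "\<And>i \<omega>. \<omega> \<in> space M \<Longrightarrow> X i \<omega> \<in> {a..b}" and ab: "a < b"
    and ex: "\<And>i. expectation (X i) = \<mu>"
  shows "AE \<omega> in M. (\<lambda>n. (\<Sum>i<n. X i \<omega>) / n) \<longlonglongrightarrow> \<mu>"
proof -
  have meas[measurable]: "X i \<in> borel_measurable M" for i
    using ind unfolding indep_vars_def by auto
  define A where "A k n = {\<omega>\<in>space M. \<bar>(\<Sum>i\<in>{..<n}. X i \<omega>) - real n * \<mu>\<bar> \<ge> real n / Suc k}" for k n
  have Asets[measurable]: "A k n \<in> sets M" for k n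
    unfolding A_def by measurable
  have AEk: "AE \<omega> in M. eventually (\<lambda>n. \<omega> \<in> space M - A k n) sequentially" for k
  proof -
    define q where "q = exp (- 2 / ((real (Suc k))^2 * (b - a)^2))"
    have q0: "q \<ge> 0" "q < 1" unfolding q_def using ab by auto
    have P: "prob (A k n) \<le> 2 * q ^ n" for n
    proof (cases "n = 0")
      case True
      have "prob (A k n) \<le> 1" by (rule prob_le_1)
      moreover have "2 * q ^ n = 2" using True by simp
      ultimately show ?thesis by linarith
    next
      case False
      interpret H: Hoeffding_ineq M "{..<n}" X "\<lambda>_. a" "\<lambda>_. b" "real n * \<mu>"
        apply unfold_locales
           apply simp
          apply (rule indep_vars_subset[OF ind], simp)
         apply (rule AE_I2, rule bnd, assumption)
        apply (simp add: ex)
        done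
      have "prob (A k n) \<le> 2 * exp (- 2 * (real n / Suc k)\<^sup>2 / (\<Sum>i\<in>{..<n}. (b - a)\<^sup>2))"
        unfolding A_def
        by (rule H.Hoeffding_ineq_abs_ge) (use False ab in auto)
      also have "- 2 * (real n / Suc k)\<^sup>2 / (\<Sum>i\<in>{..<n}. (b - a)\<^sup>2) = real n * (- 2 / ((real (Suc k))^2 * (b - a)^2))"
        unfolding sum_constant card_lessThan by (rule aux_alg) (use False ab in auto)
      also have "exp (real n * (- 2 / ((real (Suc k))^2 * (b - a)^2))) = q ^ n"
        unfolding q_def by (rule exp_of_nat_mult)
      finally show ?thesis .
    qed
    have "summable (\<lambda>n. 2 * q ^ n)"
      using q0 by (intro summable_mult summable_geometric) auto
    then have "summable (\<lambda>n. measure M (A k n))"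
      by (rule summable_comparison_test'[where N=0]) (use P in auto)
    then show ?thesis
      by (intro borel_cantelli_AE1) (auto simp: emeasure_eq_measure)
  qed
  have "AE \<omega> in M. \<forall>k. eventually (\<lambda>n. \<omega> \<in> space M - A k n) sequentially"
    using AEk by (subst AE_all_countable) auto
  then show ?thesis
  proof (rule AE_mp, intro AE_I2 impI)
    fix \<omega> assume \<omega>: "\<omega> \<in> space M" and ev: "\<forall>k. eventually (\<lambda>n. \<omega> \<in> space M - A k n) sequentially"
    show "(\<lambda>n. (\<Sum>i<n. X i \<omega>) / n) \<longlonglongrightarrow> \<mu>"
    proof (rule tendstoI)
      fix e :: real assume "e > 0"
      obtain k where k: "1 / Suc k < e"
        using reals_Archimedean[OF \<open>e > 0\<close>] by (auto simp: inverse_eq_divide)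
      have "eventually (\<lambda>n. \<omega> \<in> space M - A k n \<and> n \<ge> 1) sequentially"
        using ev[rule_format, of k] eventually_ge_at_top[of 1] by (rule eventually_conj)
      then show "eventually (\<lambda>n. dist ((\<Sum>i<n. X i \<omega>) / n) \<mu> < e) sequentially"
      proof (rule eventually_mono)
        fix n assume h: "\<omega> \<in> space M - A k n \<and> n \<ge> 1"
        then have lt: "\<bar>(\<Sum>i<n. X i \<omega>) - real n * \<mu>\<bar> < real n / Suc k"
          using \<omega> unfolding A_def by auto
        have npos: "real n > 0" using h by simp
        have "dist ((\<Sum>i<n. X i \<omega>) / n) \<mu> = \<bar>(\<Sum>i<n. X i \<omega>) - real n * \<mu>\<bar> / real n"
          using npos by (simp add: dist_real_def field_simps abs_divide)
        also have "\<dots> < 1 / Suc k"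
          using lt npos by (simp add: field_simps)
        finally show "dist ((\<Sum>i<n. X i \<omega>) / n) \<mu> < e" using k by linarith
      qed
    qed
  qed
qed


context les begin

primrec rho :: "(nat \<Rightarrow> nat) \<Rightarrow> nat \<Rightarrow> real" where
  "rho w 0 = f" | "rho w (Suc l) = phi (w l) (rho w l)"

lemma rho_bounds: "f \<le> rho w l \<and> rho w l \<le> fmax"
  by (induction l) (auto intro: phi_bounds simp: fmax_gt less_imp_le)

lemma rho_cong: "(\<And>j. j < l \<Longrightarrow> w j = w' j) \<Longrightarrow> rho w l = rho w' l"
  by (induction l) auto

definition Dm :: "(nat \<Rightarrow> nat) \<Rightarrow> nat \<Rightarrow> real" where
  "Dm w m = (\<Sum>l<m. ln (rho w (Suc l)))"

lemma Dm_cong: "(\<And>j. j < m \<Longrightarrow> w j = w' j) \<Longrightarrow> Dm w m = Dm w' m"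
  unfolding Dm_def by (intro sum.cong refl arg_cong[where f=ln] rho_cong) auto

lemma Dm_bounds: "real m * ln f \<le> Dm w m" "Dm w m \<le> real m * ln fmax"
proof -
  have b: "ln f \<le> ln (rho w (Suc l)) \<and> ln (rho w (Suc l)) \<le> ln fmax" for l
    using rho_bounds[of w "Suc l"] fpos by auto
  show "real m * ln f \<le> Dm w m" unfolding Dm_def
    using sum_bounded_below[of "{..<m}" "ln f" "\<lambda>l. ln (rho w (Suc l))"] b by auto
  show "Dm w m \<le> real m * ln fmax" unfolding Dm_def
    using sum_bounded_above[of "{..<m}" "\<lambda>l. ln (rho w (Suc l))" "ln fmax"] b by auto
qed

definition Aen :: "nat \<Rightarrow> real^2^2" where
  "Aen = (\<lambda>k. if k = 1 then leslie2 f F s else leslie2 f (F - \<Delta>) s)"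

lemma Aen_eq: "Aen k = leslie2 f (Fk k) s"
  by (simp add: Aen_def Fk_def)

definition xx :: "(nat \<Rightarrow> 'w \<Rightarrow> nat) \<Rightarrow> real^2 \<Rightarrow> 'w \<Rightarrow> nat \<Rightarrow> real" where
  "xx \<tau> z0 \<omega> t = pop Aen \<tau> z0 t \<omega> $ 1"
definition yy :: "(nat \<Rightarrow> 'w \<Rightarrow> nat) \<Rightarrow> real^2 \<Rightarrow> 'w \<Rightarrow> nat \<Rightarrow> real" where
  "yy \<tau> z0 \<omega> t = pop Aen \<tau> z0 t \<omega> $ 2"

lemma xx_Suc: "xx \<tau> z0 \<omega> (Suc t) = f * xx \<tau> z0 \<omega> t + Fk (\<tau> (Suc t) \<omega>) * yy \<tau> z0 \<omega> t"
  by (simp add: xx_def yy_def Aen_eq leslie_mult1)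
lemma yy_Suc: "yy \<tau> z0 \<omega> (Suc t) = s * xx \<tau> z0 \<omega> t"
  by (simp add: xx_def yy_def Aen_eq leslie_mult2)
lemma xx_0: "xx \<tau> z0 \<omega> 0 = z0 $ 1" and yy_0: "yy \<tau> z0 \<omega> 0 = z0 $ 2"
  by (simp_all add: xx_def yy_def)

definition "lam = (f + sqrt (f\<^sup>2 + 4 * s * F)) / 2"
definition "cc = 1 - \<Delta> / F"

lemma lam_facts: "lam > 0" "lam * lam = f * lam + s * F"
proof -
  have nn: "f^2 + 4 * s * F > 0" using fpos spos Fpos by (simp add: add_pos_pos)
  have q: "(sqrt (f\<^sup>2 + 4 * s * F))^2 = f^2 + 4 * s * F" by (rule real_sqrt_pow2) (use nn in linarith)
  have "sqrt (f\<^sup>2 + 4 * s * F) \<ge> 0" by (rule real_sqrt_ge_zero) (use nn in linarith)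
  then have "f + sqrt (f\<^sup>2 + 4 * s * F) > 0" by (rule add_pos_nonneg[OF fpos])
  then show "lam > 0" unfolding lam_def by simp
  show "lam * lam = f * lam + s * F" unfolding lam_def using q
    by (simp add: algebra_simps power2_eq_square field_simps)
qed

definition "Cb = \<bar>ln f\<bar> + \<bar>ln fmax\<bar>"

lemma cc_facts: "cc > 0" "cc \<le> 1" "cc * F = F - \<Delta>"
  using Fpos Dpos DF by (auto simp: cc_def field_simps)

context
  fixes \<tau> :: "nat \<Rightarrow> 'w \<Rightarrow> nat" and z0 :: "real^2" and \<omega> :: 'w
  assumes nn: "\<forall>i. z0 $ i \<ge> 0" and nz: "z0 \<noteq> 0"
begin

abbreviation "x \<equiv> xx \<tau> z0 \<omega>"
abbreviation "y \<equiv> yy \<tau> z0 \<omega>"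

lemma xy_nonneg: "x t \<ge> 0 \<and> y t \<ge> 0"
proof (induction t)
  case 0 then show ?case using nn by (simp add: xx_0 yy_0)
next
  case (Suc t)
  then show ?case using fpos spos Fk_pos[of "\<tau> (Suc t) \<omega>"]
    by (simp add: xx_Suc yy_Suc)
qed

lemma x_grow: "x (Suc t) \<ge> f * x t"
  using xy_nonneg[of t] Fk_pos[of "\<tau> (Suc t) \<omega>"] by (simp add: xx_Suc)

lemma x1_pos: "x 1 > 0"
proof -
  obtain i where "z0 $ i \<noteq> 0" using nz by (auto simp: vec_eq_iff)
  then have "z0 $ 1 > 0 \<or> z0 $ 2 > 0" using nn exhaust_2[of i] by (metis order_le_less)
  moreover have "x 1 = f * z0 $ 1 + Fk (\<tau> 1 \<omega>) * z0 $ 2"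
    using xx_Suc[of \<tau> z0 \<omega> 0] by (simp add: xx_0 yy_0)
  moreover have "f * z0 $ 1 \<ge> 0" "Fk (\<tau> 1 \<omega>) * z0 $ 2 \<ge> 0"
    using nn fpos Fk_pos[of "\<tau> 1 \<omega>"] by auto
  ultimately show ?thesis using fpos Fk_pos[of "\<tau> 1 \<omega>"]
    by (auto intro: add_pos_nonneg add_nonneg_pos)
qed

lemma x_pos: "t \<ge> 1 \<Longrightarrow> x t > 0"
proof (induction t rule: dec_induct)
  case base then show ?case by (rule x1_pos)
next
  case (step t)
  then show ?case using x_grow[of t] fpos by (meson less_le_trans mult_pos_pos)
qed

lemma norm_eq: "norm1 (pop Aen \<tau> z0 t \<omega>) = x t + y t"
  using xy_nonneg[of t] by (simp add: norm1_def sum_2 xx_def yy_def)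

lemma norm_bounds: "t \<ge> 1 \<Longrightarrow> x t \<le> norm1 (pop Aen \<tau> z0 t \<omega>) \<and> norm1 (pop Aen \<tau> z0 t \<omega>) \<le> (1 + s / f) * x t"
proof -
  assume "t \<ge> 1"
  then obtain n where t: "t = Suc n" by (cases t) auto
  have "y t = s * x n" by (simp add: t yy_Suc)
  also have "\<dots> = (s / f) * (f * x n)" using fpos by simp
  also have "\<dots> \<le> (s / f) * x t" using x_grow[of n] fpos spos t by (intro mult_left_mono) auto
  finally have "y t \<le> (s / f) * x t" .
  then show ?thesis using norm_eq[of t] xy_nonneg[of t] by (simp add: algebra_simps)
qed

definition "r t = x t / x (t - 1)"

lemma r_bounds: "t \<ge> 2 \<Longrightarrow> f \<le> r t \<and> r t \<le> fmax"
proof -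
  assume "t \<ge> 2"
  then obtain n where t: "t = Suc (Suc n)" by (metis add_2_eq_Suc le_Suc_ex)
  have x1: "x (Suc n) > 0" using x_pos by simp
  have xn: "x n \<ge> 0" using xy_nonneg by simp
  have eq: "x t = f * x (Suc n) + Fk (\<tau> t \<omega>) * s * x n"
    by (simp add: t xx_Suc yy_Suc)
  have a: "Fk (\<tau> t \<omega>) * s * x n \<ge> 0" using Fk_pos[of "\<tau> t \<omega>"] spos xn by simp
  have "Fk (\<tau> t \<omega>) * s * x n \<le> F * s * x n"
    using Fk_le[of "\<tau> t \<omega>"] spos xn by (intro mult_right_mono) auto
  also have "\<dots> = (s * F / f) * (f * x n)" using fpos by simp
  also have "\<dots> \<le> (s * F / f) * x (Suc n)"
    using x_grow[of n] fpos spos Fpos by (intro mult_left_mono) auto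
  finally have b: "Fk (\<tau> t \<omega>) * s * x n \<le> (s * F / f) * x (Suc n)" .
  have "r t = f + Fk (\<tau> t \<omega>) * s * x n / x (Suc n)"
    unfolding r_def eq using x1 by (simp add: t field_simps)
  moreover have "Fk (\<tau> t \<omega>) * s * x n / x (Suc n) \<ge> 0" using a x1 by simp
  moreover have "Fk (\<tau> t \<omega>) * s * x n / x (Suc n) \<le> s * F / f"
    using b x1 by (simp add: divide_le_eq)
  ultimately show ?thesis by (simp add: fmax_def)
qed

lemma r_rec: "t \<ge> 2 \<Longrightarrow> r (Suc t) = phi (\<tau> (Suc t) \<omega>) (r t)"
proof -
  assume "t \<ge> 2"
  then obtain n where t: "t = Suc (Suc n)" by (metis add_2_eq_Suc le_Suc_ex)
  have x1: "x (Suc n) > 0" and x2: "x (Suc (Suc n)) > 0" using x_pos by auto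
  have eq: "x (Suc t) = f * x t + Fk (\<tau> (Suc t) \<omega>) * s * x (Suc n)"
    by (simp add: t xx_Suc yy_Suc)
  show ?thesis unfolding r_def phi_def eq using x1 x2 by (simp add: t field_simps)
qed

lemma r_close:
  assumes "p \<ge> 2"
  shows "\<bar>ln (r (p + l)) - ln (rho (\<lambda>j. \<tau> (p + 1 + j) \<omega>) l)\<bar> \<le> theta ^ l * (ln fmax - ln f)"
proof (induction l)
  case 0
  have "f \<le> r p" "r p \<le> fmax" using r_bounds[OF assms] by auto
  then show ?case using fpos by auto
next
  case (Suc l)
  let ?w = "\<lambda>j. \<tau> (p + 1 + j) \<omega>"
  have "r (p + Suc l) = phi (?w l) (r (p + l))"
    using r_rec[of "p + l"] assms by simp
  moreover have "rho ?w (Suc l) = phi (?w l) (rho ?w l)" by simp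
  moreover have "f \<le> r (p + l)" using r_bounds[of "p + l"] assms by simp
  moreover have "f \<le> rho ?w l" using rho_bounds by simp
  ultimately have "\<bar>ln (r (p + Suc l)) - ln (rho ?w (Suc l))\<bar> \<le> theta * \<bar>ln (r (p + l)) - ln (rho ?w l)\<bar>"
    using contraction by presburger
  also have "\<dots> \<le> theta * (theta ^ l * (ln fmax - ln f))"
    using Suc theta_bounds by (intro mult_left_mono) auto
  finally show ?case by simp
qed

lemma logx_tele: "p \<ge> 1 \<Longrightarrow> ln (x (p + m)) - ln (x p) = (\<Sum>l<m. ln (r (p + Suc l)))"
proof (induction m)
  case 0 then show ?case by simp
next
  case (Suc m)
  have a: "x (p + m) > 0" "x (p + Suc m) > 0" using x_pos Suc.prems by auto
  have "ln (r (p + Suc m)) = ln (x (p + Suc m)) - ln (x (p + m))"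
    unfolding r_def using a by (simp add: ln_div)
  then show ?case using Suc by simp
qed

lemma block_bound:
  assumes "p \<ge> 2"
  shows "\<bar>ln (x (p + m)) - ln (x p) - Dm (\<lambda>j. \<tau> (p + 1 + j) \<omega>) m\<bar> \<le> (ln fmax - ln f) / (1 - theta)"
proof -
  let ?w = "\<lambda>j. \<tau> (p + 1 + j) \<omega>"
  let ?B = "ln fmax - ln f"
  have B: "?B \<ge> 0" using fmax_gt fpos by simp
  have "ln (x (p + m)) - ln (x p) - Dm ?w m = (\<Sum>l<m. ln (r (p + Suc l)) - ln (rho ?w (Suc l)))"
    using logx_tele[of p m] assms by (simp add: Dm_def sum_subtractf)
  then have "\<bar>ln (x (p + m)) - ln (x p) - Dm ?w m\<bar> \<le> (\<Sum>l<m. \<bar>ln (r (p + Suc l)) - ln (rho ?w (Suc l))\<bar>)"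
    by (simp add: sum_abs)
  also have "\<dots> \<le> (\<Sum>l<m. theta ^ l * ?B)"
  proof (rule sum_mono)
    fix l
    have "\<bar>ln (r (p + Suc l)) - ln (rho ?w (Suc l))\<bar> \<le> theta ^ Suc l * ?B"
      by (rule r_close[OF assms])
    also have "\<dots> \<le> theta ^ l * ?B"
      using theta_bounds B by (intro mult_right_mono power_decreasing) auto
    finally show "\<bar>ln (r (p + Suc l)) - ln (rho ?w (Suc l))\<bar> \<le> theta ^ l * ?B" .
  qed
  also have "\<dots> = ?B * ((1 - theta ^ m) / (1 - theta))"
    using theta_bounds by (simp add: sum_distrib_right[symmetric] sum_gp_strict mult.commute)
  also have "\<dots> \<le> ?B * (1 / (1 - theta))"
    using theta_bounds B by (intro mult_left_mono divide_right_mono) auto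
  finally show ?thesis by simp
qed

lemma step_bound: "t \<ge> 1 \<Longrightarrow> \<bar>ln (x (t + d)) - ln (x t)\<bar> \<le> real d * Cb"
proof -
  assume t: "t \<ge> 1"
  have "\<bar>ln (x (t + d)) - ln (x t)\<bar> = \<bar>\<Sum>l<d. ln (r (t + Suc l))\<bar>" using logx_tele[OF t] by simp
  also have "\<dots> \<le> (\<Sum>l<d. \<bar>ln (r (t + Suc l))\<bar>)" by (rule sum_abs)
  also have "\<dots> \<le> (\<Sum>l<d. Cb)"
  proof (rule sum_mono)
    fix l
    have "f \<le> r (t + Suc l)" "r (t + Suc l) \<le> fmax" using r_bounds[of "t + Suc l"] t by auto
    then have "ln f \<le> ln (r (t + Suc l))" "ln (r (t + Suc l)) \<le> ln fmax" using fpos by auto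
    then show "\<bar>ln (r (t + Suc l))\<bar> \<le> Cb" unfolding Cb_def by linarith
  qed
  finally show ?thesis by simp
qed

definition "V t = lam * x t + F * y t"

lemma V_step: "V (Suc t) \<ge> lam * (if \<tau> (Suc t) \<omega> = 1 then 1 else cc) * V t"
proof -
  have eq: "V (Suc t) = lam * lam * x t + lam * Fk (\<tau> (Suc t) \<omega>) * y t"
    unfolding V_def xx_Suc yy_Suc lam_facts(2) by (simp add: algebra_simps)
  show ?thesis
  proof (cases "\<tau> (Suc t) \<omega> = 1")
    case True
    then show ?thesis by (subst eq) (simp add: V_def Fk_def algebra_simps)
  next
    case False
    then have Fk: "Fk (\<tau> (Suc t) \<omega>) = cc * F" using cc_facts by (simp add: Fk_def)
    have "cc * (lam * lam * x t) \<le> lam * lam * x t"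
      by (rule mult_left_le_one_le) (use cc_facts xy_nonneg[of t] lam_facts(1) in auto)
    then show ?thesis using False by (subst eq) (simp add: V_def Fk algebra_simps)
  qed
qed

lemma V0_pos: "V 0 > 0"
proof -
  obtain i where "z0 $ i \<noteq> 0" using nz by (auto simp: vec_eq_iff)
  then have "z0 $ 1 > 0 \<or> z0 $ 2 > 0" using nn exhaust_2[of i] by (metis order_le_less)
  moreover have "lam * z0 $ 1 \<ge> 0" "F * z0 $ 2 \<ge> 0" using nn lam_facts Fpos by auto
  ultimately show ?thesis using lam_facts Fpos unfolding V_def xx_0 yy_0
    by (auto intro: add_pos_nonneg add_nonneg_pos)
qed

lemma V_lower: "V t > 0 \<and> ln (V t) \<ge> ln (V 0) + real t * ln lam + (\<Sum>i<t. if \<tau> (Suc i) \<omega> = 1 then 0 else 1) * ln cc"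
proof (induction t)
  case 0 then show ?case using V0_pos by simp
next
  case (Suc t)
  define k where "k = (if \<tau> (Suc t) \<omega> = 1 then 1 else cc)"
  have k: "k > 0" "ln k = (if \<tau> (Suc t) \<omega> = 1 then 0 else 1) * ln cc" using cc_facts by (auto simp: k_def)
  have pos: "lam * k * V t > 0" using Suc k lam_facts by simp
  have le: "lam * k * V t \<le> V (Suc t)" using V_step[of t] by (simp add: k_def)
  then have "V (Suc t) > 0" using pos by linarith
  moreover have "ln (lam * k * V t) \<le> ln (V (Suc t))" using le pos by simp
  moreover have "ln (lam * k * V t) = ln lam + ln k + ln (V t)"
    using k lam_facts Suc by (simp add: ln_mult)
  ultimately show ?case using Suc k by (simp add: algebra_simps)
qed

lemma norm_ge_V: "norm1 (pop Aen \<tau> z0 t \<omega>) \<ge> V t / (lam + F)"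
proof -
  have "V t \<le> (lam + F) * (x t + y t)"
    unfolding V_def using xy_nonneg[of t] lam_facts Fpos
    by (simp add: algebra_simps add_mono mult_left_mono)
  then show ?thesis using norm_eq[of t] lam_facts Fpos by (simp add: divide_le_eq add_pos_pos mult.commute)
qed

end
end


locale les_prob = les + prob_space +
  fixes \<tau> :: "nat \<Rightarrow> 'a \<Rightarrow> nat" and \<pi>1 :: real
  assumes ind: "indep_vars (\<lambda>_. count_space UNIV) \<tau> UNIV"
    and p1: "\<And>t. prob {\<omega> \<in> space M. \<tau> t \<omega> = 1} = \<pi>1"
    and p2: "\<And>t. prob {\<omega> \<in> space M. \<tau> t \<omega> = 2} = 1 - \<pi>1"
begin

lemma tau_meas[measurable]: "\<tau> t \<in> measurable M (count_space UNIV)"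
  using ind unfolding indep_vars_def by auto

definition "pv a = (if a = 1 then \<pi>1 else if a = 2 then 1 - \<pi>1 else 0)"

lemma prob_tau: "prob {\<omega> \<in> space M. \<tau> t \<omega> = a} = pv a"
proof -
  have s1[measurable]: "{\<omega> \<in> space M. \<tau> t \<omega> = b} \<in> sets M" for b by measurable
  show ?thesis
  proof (cases "a = 1 \<or> a = 2")
    case True then show ?thesis using p1 p2 by (auto simp: pv_def)
  next
    case False
    let ?U = "{\<omega> \<in> space M. \<tau> t \<omega> = 1} \<union> {\<omega> \<in> space M. \<tau> t \<omega> = 2}"
    have "prob ?U = prob {\<omega> \<in> space M. \<tau> t \<omega> = 1} + prob {\<omega> \<in> space M. \<tau> t \<omega> = 2}"
      by (rule finite_measure_Union) auto
    then have U: "prob ?U = 1" using p1 p2 by simp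
    have "{\<omega> \<in> space M. \<tau> t \<omega> = a} \<subseteq> space M - ?U" using False by auto
    then have "prob {\<omega> \<in> space M. \<tau> t \<omega> = a} \<le> prob (space M - ?U)"
      by (intro finite_measure_mono) auto
    also have "\<dots> = 0" using U by (subst prob_compl) auto
    finally show ?thesis using False measure_nonneg[of M "{\<omega> \<in> space M. \<tau> t \<omega> = a}"]
      by (simp add: pv_def)
  qed
qed

definition "\<mu>0 = distr M (count_space UNIV) (\<tau> 0)"

lemma marg: "distr M (count_space UNIV) (\<tau> t) = \<mu>0"
  unfolding \<mu>0_def
proof (rule measure_eqI_countable[where A=UNIV])
  fix a :: nat
  have "emeasure (distr M (count_space UNIV) (\<tau> k)) {a} = ennreal (pv a)" for k
  proof -
    have "emeasure (distr M (count_space UNIV) (\<tau> k)) {a} = emeasure M (\<tau> k -` {a} \<inter> space M)"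
      by (rule emeasure_distr) auto
    also have "\<tau> k -` {a} \<inter> space M = {\<omega> \<in> space M. \<tau> k \<omega> = a}" by auto
    also have "emeasure M \<dots> = ennreal (pv a)"
      using prob_tau[of k a] by (simp add: emeasure_eq_measure)
    finally show ?thesis .
  qed
  then show "emeasure (distr M (count_space UNIV) (\<tau> t)) {a} = emeasure (distr M (count_space UNIV) (\<tau> 0)) {a}"
    by simp
qed auto

lemma indep_shift: "indep_vars (\<lambda>_. count_space UNIV) (\<lambda>l \<omega>. \<tau> (p + l) \<omega>) {..<m}"
proof -
  have "indep_vars (\<lambda>l. PiM {p + l} (\<lambda>_. count_space UNIV)) (\<lambda>l \<omega>. restrict (\<lambda>i. \<tau> i \<omega>) {p + l}) {..<m}"
    by (rule indep_vars_restrict[OF ind]) (auto simp: disjoint_family_on_def)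
  then have "indep_vars (\<lambda>_. count_space UNIV) (\<lambda>l \<omega>. (\<lambda>v. v (p + l)) (restrict (\<lambda>i. \<tau> i \<omega>) {p + l})) {..<m}"
    by (rule indep_vars_compose2) (rule measurable_component_singleton, simp)
  then show ?thesis by simp
qed

lemma stationary:
  fixes G :: "(nat \<Rightarrow> nat) \<Rightarrow> real"
  assumes m: "m > 0" and Gm[measurable]: "G \<in> borel_measurable (PiM {..<m} (\<lambda>_. count_space UNIV))"
    and Gl: "\<And>w w'. (\<And>l. l < m \<Longrightarrow> w l = w' l) \<Longrightarrow> G w = G w'"
  shows "expectation (\<lambda>\<omega>. G (\<lambda>l. \<tau> (p + l) \<omega>)) = integral\<^sup>L (PiM {..<m} (\<lambda>_. \<mu>0)) G"
proof -
  have "(\<lambda>\<omega>. G (\<lambda>l. \<tau> (p + l) \<omega>)) = (\<lambda>\<omega>. G (\<lambda>l\<in>{..<m}. \<tau> (p + l) \<omega>))"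
    by (intro ext Gl) simp
  then have "expectation (\<lambda>\<omega>. G (\<lambda>l. \<tau> (p + l) \<omega>)) =
      integral\<^sup>L (distr M (PiM {..<m} (\<lambda>_. count_space UNIV)) (\<lambda>\<omega>. \<lambda>l\<in>{..<m}. \<tau> (p + l) \<omega>)) G"
    by (simp add: integral_distr)
  also have "distr M (PiM {..<m} (\<lambda>_. count_space UNIV)) (\<lambda>\<omega>. \<lambda>l\<in>{..<m}. \<tau> (p + l) \<omega>) =
      PiM {..<m} (\<lambda>l. distr M (count_space UNIV) (\<tau> (p + l)))"
    using indep_vars_iff_distr_eq_PiM[of "{..<m}" "\<lambda>l \<omega>. \<tau> (p + l) \<omega>" "\<lambda>_. count_space UNIV"]
      indep_shift m by auto
  also have "\<dots> = PiM {..<m} (\<lambda>_. \<mu>0)" by (simp add: marg)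
  finally show ?thesis .
qed

lemma block_indep:
  fixes G :: "(nat \<Rightarrow> nat) \<Rightarrow> real"
  assumes Gm[measurable]: "G \<in> borel_measurable (PiM {..<m} (\<lambda>_. count_space UNIV))"
    and Gl: "\<And>w w'. (\<And>l. l < m \<Longrightarrow> w l = w' l) \<Longrightarrow> G w = G w'"
  shows "indep_vars (\<lambda>_. borel) (\<lambda>n \<omega>. G (\<lambda>l. \<tau> (n * m + q + l) \<omega>)) UNIV"
proof -
  define K where "K n = {n * m + q ..< n * m + q + m}" for n
  have disj: "disjoint_family_on K UNIV"
  proof (unfold disjoint_family_on_def, intro ballI impI)
    fix n n' :: nat assume "n \<noteq> n'"
    then consider "n < n'" | "n' < n" by linarith
    then show "K n \<inter> K n' = {}"
    proof cases
      case 1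
      then have "Suc n * m \<le> n' * m" by (intro mult_le_mono1) simp
      then show ?thesis by (auto simp: K_def)
    next
      case 2
      then have "Suc n' * m \<le> n * m" by (intro mult_le_mono1) simp
      then show ?thesis by (auto simp: K_def)
    qed
  qed
  have "indep_vars (\<lambda>n. PiM (K n) (\<lambda>_. count_space UNIV)) (\<lambda>n \<omega>. restrict (\<lambda>i. \<tau> i \<omega>) (K n)) UNIV"
    by (rule indep_vars_restrict[OF ind]) (use disj in auto)
  then have "indep_vars (\<lambda>_. borel) (\<lambda>n \<omega>. (\<lambda>v. G (\<lambda>l\<in>{..<m}. v (n * m + q + l))) (restrict (\<lambda>i. \<tau> i \<omega>) (K n))) UNIV"
  proof (rule indep_vars_compose2)
    fix n :: nat
    have "(\<lambda>v. \<lambda>l\<in>{..<m}. v (n * m + q + l)) \<in> measurable (PiM (K n) (\<lambda>_. count_space UNIV)) (PiM {..<m} (\<lambda>_. count_space UNIV))"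
      by (rule measurable_restrict) (rule measurable_component_singleton, simp add: K_def)
    then show "(\<lambda>v. G (\<lambda>l\<in>{..<m}. v (n * m + q + l))) \<in> borel_measurable (PiM (K n) (\<lambda>_. count_space UNIV))"
      by (rule measurable_compose) (rule Gm)
  qed
  also have "(\<lambda>n \<omega>. (\<lambda>v. G (\<lambda>l\<in>{..<m}. v (n * m + q + l))) (restrict (\<lambda>i. \<tau> i \<omega>) (K n))) =
      (\<lambda>n \<omega>. G (\<lambda>l. \<tau> (n * m + q + l) \<omega>))"
    by (intro ext Gl) (simp add: K_def)
  finally show ?thesis .
qed

end


lemma eventually_bound_aux:
  fixes P b :: "nat \<Rightarrow> real"
  assumes "b \<longlonglongrightarrow> 0" "eventually (\<lambda>t. P t \<le> c + b t) sequentially" "\<epsilon> > 0"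
  shows "eventually (\<lambda>t. P t \<le> c + \<epsilon>) sequentially"
proof -
  have "eventually (\<lambda>t. dist (b t) 0 < \<epsilon>) sequentially" using assms(1,3) by (rule tendstoD)
  then show ?thesis using assms(2)
    by eventually_elim (auto simp: dist_real_def)
qed

lemma div_tends_top: "(m::nat) > 0 \<Longrightarrow> filterlim (\<lambda>t. (t - 2) div m) at_top sequentially"
proof (unfold filterlim_at_top, intro allI)
  fix Z :: nat assume m: "m > 0"
  have "eventually (\<lambda>t. t \<ge> Z * m + 2) sequentially" by (rule eventually_ge_at_top)
  then show "eventually (\<lambda>t. Z \<le> (t - 2) div m) sequentially"
  proof eventually_elim
    fix t assume "t \<ge> Z * m + 2"
    then have "Z * m \<le> t - 2" by simp
    then have "(Z * m) div m \<le> (t - 2) div m" by (rule div_le_mono)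
    then show "Z \<le> (t - 2) div m" using m by simp
  qed
qed

context les begin

definition "E0 = (ln fmax - ln f) / (1 - theta)"

lemma E0_nonneg: "E0 \<ge> 0"
  using fmax_gt fpos theta_bounds by (simp add: E0_def)

lemma Cb_nonneg: "Cb \<ge> 0" by (simp add: Cb_def)

context
  fixes \<tau> :: "nat \<Rightarrow> 'w \<Rightarrow> nat" and z0 :: "real^2" and \<omega> :: 'w
  assumes nn: "\<forall>i. z0 $ i \<ge> 0" and nz: "z0 \<noteq> 0"
begin

lemma blocks_sum:
  "\<bar>ln (xx \<tau> z0 \<omega> (N * m + 2)) - ln (xx \<tau> z0 \<omega> 2) - (\<Sum>n<N. Dm (\<lambda>l. \<tau> (n * m + 3 + l) \<omega>) m)\<bar> \<le> real N * E0"
proof (induction N)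
  case 0 then show ?case by (simp add: numeral_2_eq_2)
next
  case (Suc N)
  have bb: "\<bar>ln (xx \<tau> z0 \<omega> (N * m + 2 + m)) - ln (xx \<tau> z0 \<omega> (N * m + 2)) - Dm (\<lambda>j. \<tau> (N * m + 2 + 1 + j) \<omega>) m\<bar> \<le> E0"
    unfolding E0_def by (rule block_bound[OF nn nz]) simp
  have e1: "Suc N * m + 2 = N * m + 2 + m" by simp
  have eq: "\<And>j. N * m + 2 + 1 + j = N * m + 3 + j" by simp
  have e2: "(\<lambda>j. \<tau> (N * m + 2 + 1 + j) \<omega>) = (\<lambda>l. \<tau> (N * m + 3 + l) \<omega>)" by (intro ext) (simp only: eq)
  show ?case using Suc bb unfolding e1 e2 by (simp add: algebra_simps)
qed

lemma approx_bound:
  assumes m: "m > 0" and t: "t \<ge> 2"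
  defines "N \<equiv> (t - 2) div m"
  defines "avg \<equiv> (\<lambda>N. (\<Sum>n<N. Dm (\<lambda>l. \<tau> (n * m + 3 + l) \<omega>) m) / N)"
  shows "\<bar>ln (xx \<tau> z0 \<omega> t) / t - e / m\<bar> \<le> E0 / m +
     ((real m * Cb + \<bar>ln (xx \<tau> z0 \<omega> 2)\<bar> + \<bar>e\<bar> * (real m + 2) / m) / t + \<bar>avg N - e\<bar> / m)"
proof -
  define j where "j = (t - 2) mod m"
  define h where "h = (\<lambda>t. ln (xx \<tau> z0 \<omega> t))"
  define S where "S = (\<Sum>n<N. Dm (\<lambda>l. \<tau> (n * m + 3 + l) \<omega>) m)"
  have tj: "t = N * m + 2 + j" unfolding N_def j_def using t by simp
  have jm: "j < m" unfolding j_def using m by simp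
  have tpos: "real t > 0" using t by simp
  have Nm: "real N * real m \<le> real t" unfolding tj by simp
  have c1: "\<bar>h (N * m + 2) - h 2 - S\<bar> \<le> real N * E0" unfolding h_def S_def by (rule blocks_sum)
  have "\<bar>h t - h (N * m + 2)\<bar> \<le> real j * Cb" unfolding h_def tj by (rule step_bound[OF nn nz]) simp
  also have "\<dots> \<le> real m * Cb" using jm Cb_nonneg by (intro mult_right_mono) auto
  finally have c2: "\<bar>h t - h (N * m + 2)\<bar> \<le> real m * Cb" .
  have c3: "\<bar>real N - real t / m\<bar> \<le> (real m + 2) / m"
  proof -
    have "real N - real t / m = - (2 + real j) / m" unfolding tj using m by (simp add: field_simps)
    then show ?thesis using jm m by (simp add: abs_divide divide_right_mono)
  qed
  have "h t - real t / m * e = (h t - h (N * m + 2)) + (h (N * m + 2) - h 2 - S) + h 2 + (S - real N * e) + (real N - real t / m) * e"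
    by (simp add: algebra_simps)
  then have "\<bar>h t - real t / m * e\<bar> \<le> real m * Cb + real N * E0 + \<bar>h 2\<bar> + \<bar>S - real N * e\<bar> + (real m + 2) / m * \<bar>e\<bar>"
  proof -
    assume eq: "h t - real t / m * e = (h t - h (N * m + 2)) + (h (N * m + 2) - h 2 - S) + h 2 + (S - real N * e) + (real N - real t / m) * e"
    have "\<bar>(real N - real t / m) * e\<bar> \<le> (real m + 2) / m * \<bar>e\<bar>"
      unfolding abs_mult using c3 by (intro mult_right_mono) auto
    then show ?thesis unfolding eq using c1 c2 by linarith
  qed
  moreover have "\<bar>S - real N * e\<bar> \<le> real t / m * \<bar>avg N - e\<bar>"
  proof (cases "N = 0")
    case True then show ?thesis by (simp add: S_def)
  next
    case False
    then have "S - real N * e = real N * (avg N - e)" by (simp add: S_def avg_def field_simps)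
    then have "\<bar>S - real N * e\<bar> = real N * \<bar>avg N - e\<bar>" by (simp add: abs_mult)
    also have "\<dots> \<le> real t / m * \<bar>avg N - e\<bar>"
      using Nm m by (intro mult_right_mono) (auto simp: field_simps)
    finally show ?thesis .
  qed
  moreover have "real N * E0 \<le> real t / m * E0"
    using Nm m E0_nonneg by (intro mult_right_mono) (auto simp: field_simps)
  ultimately have tot: "\<bar>h t - real t / m * e\<bar> \<le> real t / m * E0 + (real m * Cb + \<bar>h 2\<bar> + \<bar>e\<bar> * (real m + 2) / m) + real t / m * \<bar>avg N - e\<bar>"
    by (simp add: algebra_simps)
  have "\<bar>h t / t - e / m\<bar> = \<bar>h t - real t / m * e\<bar> / t"
    using tpos m by (simp add: field_simps abs_divide)
  also have "\<dots> \<le> (real t / m * E0 + (real m * Cb + \<bar>h 2\<bar> + \<bar>e\<bar> * (real m + 2) / m) + real t / m * \<bar>avg N - e\<bar>) / t"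
    using tot tpos by (simp add: divide_right_mono)
  also have "\<dots> = E0 / m + ((real m * Cb + \<bar>h 2\<bar> + \<bar>e\<bar> * (real m + 2) / m) / t + \<bar>avg N - e\<bar> / m)"
    using tpos m by (simp add: field_simps)
  finally show ?thesis unfolding h_def .
qed

lemma approx:
  assumes m: "m > 0"
    and lim: "(\<lambda>N. (\<Sum>n<N. Dm (\<lambda>l. \<tau> (n * m + 3 + l) \<omega>) m) / N) \<longlonglongrightarrow> e"
    and eps: "\<epsilon> > 0"
  shows "eventually (\<lambda>t. \<bar>ln (xx \<tau> z0 \<omega> t) / t - e / m\<bar> \<le> E0 / m + \<epsilon>) sequentially"
proof (rule eventually_bound_aux[OF _ _ eps])
  define K where "K = real m * Cb + \<bar>ln (xx \<tau> z0 \<omega> 2)\<bar> + \<bar>e\<bar> * (real m + 2) / m"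
  define avg where "avg = (\<lambda>N. (\<Sum>n<N. Dm (\<lambda>l. \<tau> (n * m + 3 + l) \<omega>) m) / N)"
  show "eventually (\<lambda>t. \<bar>ln (xx \<tau> z0 \<omega> t) / t - e / m\<bar> \<le> E0 / m + (K / t + \<bar>avg ((t - 2) div m) - e\<bar> / m)) sequentially"
    using eventually_ge_at_top[of 2] by eventually_elim (unfold K_def avg_def, rule approx_bound[OF m])
  have a: "(\<lambda>t. K / real t) \<longlonglongrightarrow> 0"
    by (rule tendsto_divide_0[OF tendsto_const filterlim_at_top_imp_at_infinity[OF filterlim_real_sequentially]])
  have "(\<lambda>t. avg ((t - 2) div m)) \<longlonglongrightarrow> e"
    using lim unfolding avg_def by (rule filterlim_compose) (rule div_tends_top[OF m])
  then have "(\<lambda>t. \<bar>avg ((t - 2) div m) - e\<bar> / m) \<longlonglongrightarrow> \<bar>e - e\<bar> / m"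
    using m by (intro tendsto_intros) auto
  then have b: "(\<lambda>t. \<bar>avg ((t - 2) div m) - e\<bar> / m) \<longlonglongrightarrow> 0" by simp
  show "(\<lambda>t. K / t + \<bar>avg ((t - 2) div m) - e\<bar> / m) \<longlonglongrightarrow> 0"
    using tendsto_add[OF a b] by simp
qed

end
end


lemma small_k: assumes "(\<delta>::real) > 0" "C \<ge> 0" shows "\<exists>k. C / real (Suc k) < \<delta>"
proof -
  have "\<delta> / (C + 1) > 0" using assms by simp
  then obtain n where n: "inverse (real (Suc n)) < \<delta> / (C + 1)" using reals_Archimedean by blast
  have "C / real (Suc n) \<le> (C + 1) * inverse (real (Suc n))" using assms by (simp add: divide_right_mono field_simps)
  also have "\<dots> < (C + 1) * (\<delta> / (C + 1))" using n assms by (intro mult_strict_left_mono) auto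
  also have "\<dots> = \<delta>" using assms by simp
  finally show ?thesis by blast
qed

lemma (in prob_space) AE_ex: assumes "AE x in M. P x" shows "\<exists>x\<in>space M. P x"
proof (rule ccontr)
  assume a: "\<not> (\<exists>x\<in>space M. P x)"
  have "AE x in M. P x \<longrightarrow> False" using a by (intro AE_I2) auto
  with assms have "AE x in M. False" by (rule AE_mp)
  then show False using AE_False by simp
qed

context les_prob begin

lemma rho_meas: "l \<le> m \<Longrightarrow> (\<lambda>w. rho w l) \<in> borel_measurable (PiM {..<m} (\<lambda>_. count_space UNIV))"
proof (induction l)
  case 0 then show ?case by simp
next
  case (Suc l)
  then have lm: "l < m" by simp
  have c: "(\<lambda>w. w l) \<in> measurable (PiM {..<m} (\<lambda>_. count_space UNIV)) (count_space UNIV)"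
    by (rule measurable_component_singleton) (simp add: lm)
  have h1: "(\<lambda>w. Fk (w l)) \<in> borel_measurable (PiM {..<m} (\<lambda>_. count_space UNIV))"
    using measurable_compose[OF c, of Fk borel] by simp
  have h2: "(\<lambda>w. rho w l) \<in> borel_measurable (PiM {..<m} (\<lambda>_. count_space UNIV))"
    using Suc by simp
  have "(\<lambda>w. rho w (Suc l)) = (\<lambda>w. f + s * Fk (w l) / rho w l)" by (simp add: phi_def)
  also have "\<dots> \<in> borel_measurable (PiM {..<m} (\<lambda>_. count_space UNIV))"
    by (intro borel_measurable_add borel_measurable_times borel_measurable_divide h1 h2 measurable_const) auto
  finally show ?case .
qed

lemma Dm_meas: "(\<lambda>w. Dm w m) \<in> borel_measurable (PiM {..<m} (\<lambda>_. count_space UNIV))"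
  unfolding Dm_def by (intro borel_measurable_sum borel_measurable_ln rho_meas) auto

definition "ee m = integral\<^sup>L (PiM {..<m} (\<lambda>_. \<mu>0)) (\<lambda>w. Dm w m)"

lemma slln_blocks:
  assumes m: "m > 0"
  shows "AE \<omega> in M. (\<lambda>N. (\<Sum>n<N. Dm (\<lambda>l. \<tau> (n * m + 3 + l) \<omega>) m) / N) \<longlonglongrightarrow> ee m"
proof (rule slln_bounded)
  show "indep_vars (\<lambda>_. borel) (\<lambda>n \<omega>. Dm (\<lambda>l. \<tau> (n * m + 3 + l) \<omega>) m) UNIV"
    by (rule block_indep[OF Dm_meas Dm_cong]) auto
  show "Dm (\<lambda>l. \<tau> (n * m + 3 + l) \<omega>) m \<in> {real m * ln f .. real m * ln fmax}" for n \<omega>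
    using Dm_bounds by auto
  show "real m * ln f < real m * ln fmax" using m fmax_gt fpos by simp
  show "expectation (\<lambda>\<omega>. Dm (\<lambda>l. \<tau> (n * m + 3 + l) \<omega>) m) = ee m" for n
    unfolding ee_def by (rule stationary[OF m Dm_meas Dm_cong]) auto
qed

lemma AE_ind: "AE \<omega> in M. (\<lambda>t. (\<Sum>i<t. if \<tau> (Suc i) \<omega> = 1 then 0 else 1) / t) \<longlonglongrightarrow> 1 - \<pi>1"
proof (rule slln_bounded)
  define G :: "(nat \<Rightarrow> nat) \<Rightarrow> real" where "G w = (if w 0 = 1 then 0 else 1)" for w
  have c: "(\<lambda>w. w 0) \<in> measurable (PiM {..<1::nat} (\<lambda>_. count_space UNIV)) (count_space UNIV)"
    by (rule measurable_component_singleton) simp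
  have "(\<lambda>w. (\<lambda>v::nat. if v = 1 then 0 else (1::real)) (w 0)) \<in> borel_measurable (PiM {..<1::nat} (\<lambda>_. count_space UNIV))"
    by (rule measurable_compose[OF c]) simp
  moreover have "G = (\<lambda>w. (\<lambda>v::nat. if v = 1 then 0 else (1::real)) (w 0))" by (rule ext) (simp add: G_def)
  ultimately have Gm: "G \<in> borel_measurable (PiM {..<1::nat} (\<lambda>_. count_space UNIV))" by simp
  have "indep_vars (\<lambda>_. borel) (\<lambda>n \<omega>. G (\<lambda>l. \<tau> (n * 1 + 1 + l) \<omega>)) UNIV"
    by (rule block_indep[OF Gm]) (simp add: G_def)
  moreover have "(\<lambda>n \<omega>. G (\<lambda>l. \<tau> (n * 1 + 1 + l) \<omega>)) = (\<lambda>i \<omega>. if \<tau> (Suc i) \<omega> = 1 then 0 else 1)"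
    by (simp add: G_def)
  ultimately show "indep_vars (\<lambda>_. borel) (\<lambda>i \<omega>. if \<tau> (Suc i) \<omega> = 1 then 0 else (1::real)) UNIV" by simp
  show "(if \<tau> (Suc i) \<omega> = 1 then 0 else 1) \<in> {0::real..1}" for i \<omega> by simp
  show "(0::real) < 1" by simp
  show "expectation (\<lambda>\<omega>. if \<tau> (Suc i) \<omega> = 1 then 0 else 1) = 1 - \<pi>1" for i
  proof -
    define A where "A = space M - {\<omega> \<in> space M. \<tau> (Suc i) \<omega> = 1}"
    have A[measurable]: "A \<in> sets M" unfolding A_def by measurable
    have "expectation (\<lambda>\<omega>. if \<tau> (Suc i) \<omega> = 1 then 0 else 1) = expectation (indicator A)"
      by (rule Bochner_Integration.integral_cong) (auto simp: A_def indicator_def)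
    also have "\<dots> = prob A" by simp
    also have "\<dots> = 1 - \<pi>1" unfolding A_def using p1[of "Suc i"] by (subst prob_compl) auto
    finally show ?thesis .
  qed
qed

context
  fixes z0 :: "real^2"
  assumes nn: "\<forall>i. z0 $ i \<ge> 0" and nz: "z0 \<noteq> 0"
begin

definition "gg \<omega> t = ln (norm1 (pop Aen \<tau> z0 t \<omega>)) / real t"
definition "uu \<omega> t = ln (xx \<tau> z0 \<omega> t) / real t"

lemma gg_uu: "(\<lambda>t. gg \<omega> t - uu \<omega> t) \<longlonglongrightarrow> 0"
proof (rule Lim_null_comparison)
  let ?c = "ln (1 + s / f)"
  show "eventually (\<lambda>t. norm (gg \<omega> t - uu \<omega> t) \<le> ?c / real t) sequentially"
    using eventually_ge_at_top[of 1]
  proof eventually_elim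
    fix t :: nat assume t: "t \<ge> 1"
    have xp: "xx \<tau> z0 \<omega> t > 0" by (rule x_pos[where \<tau>=\<tau> and \<omega>=\<omega>, OF nn nz t])
    note b = norm_bounds[where \<tau>=\<tau> and \<omega>=\<omega>, OF nn nz t]
    have sf: "1 + s / f > 0" using spos fpos by (simp add: add_pos_pos)
    have l1: "ln (xx \<tau> z0 \<omega> t) \<le> ln (norm1 (pop Aen \<tau> z0 t \<omega>))" using b xp by simp
    have "ln (norm1 (pop Aen \<tau> z0 t \<omega>)) \<le> ln ((1 + s / f) * xx \<tau> z0 \<omega> t)"
      using b xp sf by (intro ln_mono) auto
    also have "\<dots> = ?c + ln (xx \<tau> z0 \<omega> t)" using xp sf by (simp add: ln_mult)
    finally have l2: "ln (norm1 (pop Aen \<tau> z0 t \<omega>)) \<le> ?c + ln (xx \<tau> z0 \<omega> t)" .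
    have tp: "real t > 0" using t by simp
    have "gg \<omega> t - uu \<omega> t = (ln (norm1 (pop Aen \<tau> z0 t \<omega>)) - ln (xx \<tau> z0 \<omega> t)) / t"
      by (simp add: gg_def uu_def diff_divide_distrib)
    then show "norm (gg \<omega> t - uu \<omega> t) \<le> ?c / real t"
      using l1 l2 tp by (simp add: abs_divide divide_right_mono)
  qed
  show "(\<lambda>t. ?c / real t) \<longlonglongrightarrow> 0"
    by (rule tendsto_divide_0[OF tendsto_const filterlim_at_top_imp_at_infinity[OF filterlim_real_sequentially]])
qed

lemma lim_exists: "\<exists>L. AE \<omega> in M. gg \<omega> \<longlonglongrightarrow> L"
proof -
  define a where "a k = ee (Suc k) / real (Suc k)" for k
  define Good where "Good \<omega> \<longleftrightarrow> (\<forall>k. (\<lambda>N. (\<Sum>n<N. Dm (\<lambda>l. \<tau> (n * Suc k + 3 + l) \<omega>) (Suc k)) / N) \<longlonglongrightarrow> ee (Suc k))" for \<omega>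
  have AEG: "AE \<omega> in M. Good \<omega>"
    unfolding Good_def by (subst AE_all_countable) (intro allI slln_blocks, simp)
  have app: "eventually (\<lambda>t. \<bar>uu \<omega> t - a k\<bar> \<le> E0 / real (Suc k) + \<epsilon>) sequentially"
    if "Good \<omega>" "\<epsilon> > 0" for \<omega> k \<epsilon>
    using approx[where \<tau>=\<tau> and \<omega>=\<omega> and m="Suc k" and e="ee (Suc k)" and \<epsilon>=\<epsilon>, OF nn nz] that
    unfolding Good_def uu_def a_def by simp
  obtain \<omega>0 where g0: "Good \<omega>0" using AE_ex[OF AEG] by blast
  have dab: "\<bar>a k - a k'\<bar> \<le> E0 / real (Suc k) + E0 / real (Suc k')" for k k'
  proof (rule field_le_epsilon)
    fix e :: real assume e: "e > 0"
    have ev1: "eventually (\<lambda>t. \<bar>uu \<omega>0 t - a k\<bar> \<le> E0 / real (Suc k) + e / 2) sequentially"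
      by (rule app[OF g0]) (use e in simp)
    have ev2: "eventually (\<lambda>t. \<bar>uu \<omega>0 t - a k'\<bar> \<le> E0 / real (Suc k') + e / 2) sequentially"
      by (rule app[OF g0]) (use e in simp)
    have "eventually (\<lambda>t. \<bar>uu \<omega>0 t - a k\<bar> \<le> E0 / real (Suc k) + e / 2 \<and> \<bar>uu \<omega>0 t - a k'\<bar> \<le> E0 / real (Suc k') + e / 2) sequentially"
      using ev1 ev2 by (rule eventually_conj)
    then have "\<exists>t. \<bar>uu \<omega>0 t - a k\<bar> \<le> E0 / real (Suc k) + e / 2 \<and> \<bar>uu \<omega>0 t - a k'\<bar> \<le> E0 / real (Suc k') + e / 2"
      by (rule eventually_happens'[OF trivial_limit_sequentially])
    then obtain t where "\<bar>uu \<omega>0 t - a k\<bar> \<le> E0 / real (Suc k) + e / 2" "\<bar>uu \<omega>0 t - a k'\<bar> \<le> E0 / real (Suc k') + e / 2"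
      by blast
    then show "\<bar>a k - a k'\<bar> \<le> E0 / real (Suc k) + E0 / real (Suc k') + e" by linarith
  qed
  have "Cauchy a"
  proof (rule CauchyI)
    fix e :: real assume e: "e > 0"
    obtain K where K: "E0 / real (Suc K) < e / 2" using small_k[of "e/2" E0] e E0_nonneg by auto
    have "\<forall>k\<ge>K. \<forall>k'\<ge>K. norm (a k - a k') < e"
    proof (intro allI impI)
      fix k k' assume kk: "k \<ge> K" "k' \<ge> K"
      have "E0 / real (Suc k) \<le> E0 / real (Suc K)" "E0 / real (Suc k') \<le> E0 / real (Suc K)"
        using kk E0_nonneg by (auto intro!: divide_left_mono)
      then show "norm (a k - a k') < e" using dab[of k k'] K unfolding real_norm_def by linarith
    qed
    then show "\<exists>M. \<forall>m\<ge>M. \<forall>n\<ge>M. norm (a m - a n) < e" by blast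
  qed
  then obtain L where aL: "a \<longlonglongrightarrow> L" using Cauchy_convergent_iff convergent_def by blast
  have aLb: "\<bar>a k - L\<bar> \<le> E0 / real (Suc k)" for k
  proof -
    have l1: "(\<lambda>k'. \<bar>a k - a k'\<bar>) \<longlonglongrightarrow> \<bar>a k - L\<bar>" using aL by (intro tendsto_intros)
    have l2: "(\<lambda>k'. E0 / real (Suc k) + E0 / real (Suc k')) \<longlonglongrightarrow> E0 / real (Suc k) + 0"
    proof (intro tendsto_add tendsto_const)
      have "(\<lambda>n. E0 / real n) \<longlonglongrightarrow> 0"
        by (rule tendsto_divide_0[OF tendsto_const filterlim_at_top_imp_at_infinity[OF filterlim_real_sequentially]])
      then show "(\<lambda>k'. E0 / real (Suc k')) \<longlonglongrightarrow> 0" by (rule LIMSEQ_Suc)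
    qed
    have ev: "eventually (\<lambda>k'. \<bar>a k - a k'\<bar> \<le> E0 / real (Suc k) + E0 / real (Suc k')) sequentially"
      by (rule always_eventually) (intro allI dab)
    from tendsto_le[OF trivial_limit_sequentially l2 l1 ev] show ?thesis by simp
  qed
  have GL: "gg \<omega> \<longlonglongrightarrow> L" if G: "Good \<omega>" for \<omega>
  proof -
    have "uu \<omega> \<longlonglongrightarrow> L"
    proof (rule tendstoI)
      fix e :: real assume e: "e > 0"
      obtain k where k: "E0 / real (Suc k) < e / 3" using small_k[of "e/3" E0] e E0_nonneg by auto
      show "eventually (\<lambda>t. dist (uu \<omega> t) L < e) sequentially"
      proof -
        have "eventually (\<lambda>t. \<bar>uu \<omega> t - a k\<bar> \<le> E0 / real (Suc k) + e / 3) sequentially"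
          by (rule app[OF G]) (use e in simp)
        then show ?thesis
        proof (rule eventually_mono)
        fix t assume "\<bar>uu \<omega> t - a k\<bar> \<le> E0 / real (Suc k) + e / 3"
        moreover have "\<bar>uu \<omega> t - L\<bar> \<le> \<bar>uu \<omega> t - a k\<bar> + \<bar>a k - L\<bar>"
          using abs_triangle_ineq[of "uu \<omega> t - a k" "a k - L"] by simp
        ultimately show "dist (uu \<omega> t) L < e" using aLb[of k] k unfolding dist_real_def by linarith
      qed
      qed
    qed
    then have "(\<lambda>t. uu \<omega> t + (gg \<omega> t - uu \<omega> t)) \<longlonglongrightarrow> L + 0"
      by (intro tendsto_add gg_uu)
    then show ?thesis by simp
  qed
  have "AE \<omega> in M. gg \<omega> \<longlonglongrightarrow> L" using AEG by (rule AE_mp) (intro AE_I2 impI GL)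
  then show ?thesis by blast
qed

lemma lower:
  assumes "AE \<omega> in M. gg \<omega> \<longlonglongrightarrow> L"
  shows "L \<ge> ln lam + (1 - \<pi>1) * ln cc"
proof -
  have "AE \<omega> in M. gg \<omega> \<longlonglongrightarrow> L \<and> (\<lambda>t. (\<Sum>i<t. if \<tau> (Suc i) \<omega> = 1 then 0 else 1) / t) \<longlonglongrightarrow> 1 - \<pi>1"
    using assms AE_ind by auto
  from AE_ex[OF this] obtain \<omega> where g: "gg \<omega> \<longlonglongrightarrow> L" and ind: "(\<lambda>t. (\<Sum>i<t. if \<tau> (Suc i) \<omega> = 1 then 0 else 1) / t) \<longlonglongrightarrow> 1 - \<pi>1"
    by blast
  define S where "S t = (\<Sum>i<t. if \<tau> (Suc i) \<omega> = 1 then 0 else 1::real)" for t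
  define C where "C = ln (V TYPE('a) \<tau> z0 \<omega> 0) - ln (lam + F)"
  have lb: "gg \<omega> t \<ge> C / t + ln lam + S t / t * ln cc" if t: "t \<ge> 1" for t
  proof -
    have tp: "real t > 0" using t by simp
    have VL: "V TYPE('a) \<tau> z0 \<omega> t > 0" "ln (V TYPE('a) \<tau> z0 \<omega> t) \<ge> ln (V TYPE('a) \<tau> z0 \<omega> 0) + real t * ln lam + S t * ln cc"
      using V_lower[where \<tau>=\<tau> and \<omega>=\<omega> and t=t, OF nn nz] by (auto simp: S_def)
    have lF: "lam + F > 0" using lam_facts Fpos by simp
    have "V TYPE('a) \<tau> z0 \<omega> t / (lam + F) > 0" using VL lF by simp
    then have "ln (V TYPE('a) \<tau> z0 \<omega> t / (lam + F)) \<le> ln (norm1 (pop Aen \<tau> z0 t \<omega>))"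
      using norm_ge_V[where \<tau>=\<tau> and \<omega>=\<omega> and t=t, OF nn nz] by simp
    moreover have "ln (V TYPE('a) \<tau> z0 \<omega> t / (lam + F)) = ln (V TYPE('a) \<tau> z0 \<omega> t) - ln (lam + F)"
      using VL lF by (simp add: ln_div)
    ultimately have "C + real t * ln lam + S t * ln cc \<le> ln (norm1 (pop Aen \<tau> z0 t \<omega>))"
      using VL unfolding C_def by linarith
    then have "(C + real t * ln lam + S t * ln cc) / t \<le> gg \<omega> t"
      unfolding gg_def using tp by (simp add: divide_right_mono)
    moreover have "(C + real t * ln lam + S t * ln cc) / t = C / t + ln lam + S t / t * ln cc"
      using tp by (simp add: field_simps)
    ultimately show ?thesis by simp
  qed
  have lim: "(\<lambda>t. C / real t + ln lam + S t / t * ln cc) \<longlonglongrightarrow> 0 + ln lam + (1 - \<pi>1) * ln cc"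
  proof (intro tendsto_add tendsto_mult tendsto_const)
    show "(\<lambda>t. C / real t) \<longlonglongrightarrow> 0"
      by (rule tendsto_divide_0[OF tendsto_const filterlim_at_top_imp_at_infinity[OF filterlim_real_sequentially]])
    show "(\<lambda>t. S t / real t) \<longlonglongrightarrow> 1 - \<pi>1" using ind by (simp add: S_def)
  qed
  have ev: "eventually (\<lambda>t. C / real t + ln lam + S t / t * ln cc \<le> gg \<omega> t) sequentially"
    using eventually_ge_at_top[of 1] by eventually_elim (rule lb)
  from tendsto_le[OF trivial_limit_sequentially g lim ev] show ?thesis by simp
qed

lemma norm_pos: "t \<ge> 1 \<Longrightarrow> norm1 (pop Aen \<tau> z0 t \<omega>) > 0"
  using x_pos[where \<tau>=\<tau> and \<omega>=\<omega> and t=t, OF nn nz] norm_bounds[where \<tau>=\<tau> and \<omega>=\<omega> and t=t, OF nn nz]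
  by linarith

lemma main_lim: "\<exists>L. (AE \<omega> in M. (\<lambda>t. ln (norm1 (pop Aen \<tau> z0 t \<omega>)) / real t) \<longlonglongrightarrow> L) \<and> L \<ge> ln lam + (1 - \<pi>1) * ln cc"
proof -
  obtain L where L: "AE \<omega> in M. gg \<omega> \<longlonglongrightarrow> L" using lim_exists by blast
  have eq: "gg \<omega> = (\<lambda>t. ln (norm1 (pop Aen \<tau> z0 t \<omega>)) / real t)" for \<omega> by (rule ext) (simp add: gg_def)
  show ?thesis using L lower[OF L] unfolding eq by blast
qed

end
end


theorem mainTheorem7:
  fixes f F s \<Delta> \<pi>1 :: real
    and M :: "'w measure" and \<tau> :: "nat \<Rightarrow> 'w \<Rightarrow> nat" and z0 :: "real^2"
  assumes "f > 0" "F > 0" "0 < s" "s \<le> 1" "f + s * F > 1"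
    and "0 < \<Delta>" "\<Delta> < F"
    and "0 < \<pi>1" "\<pi>1 < 1"
    and "prob_space M"
    and "prob_space.indep_vars M (\<lambda>_. count_space UNIV) \<tau> UNIV"
    and "\<And>t. measure M {\<omega> \<in> space M. \<tau> t \<omega> = 1} = \<pi>1"
    and "\<And>t. measure M {\<omega> \<in> space M. \<tau> t \<omega> = 2} = 1 - \<pi>1"
    and "\<forall>i. z0 $ i \<ge> 0" and "z0 \<noteq> 0"
  defines "Aenv \<equiv> (\<lambda>k. if k = 1 then leslie2 f F s else leslie2 f (F - \<Delta>) s)"
  shows "log_stoch_growth M Aenv \<tau> z0
           \<ge> ln (spec_rad (leslie2 f F s)) + (1 - \<pi>1) * ln (1 - \<Delta> / F)
         \<and> spec_rad (leslie2 f F s) = (f + sqrt (f\<^sup>2 + 4 * s * F)) / 2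
         \<and> (\<Delta> < F * (1 - spec_rad (leslie2 f F s) powr (1 / (\<pi>1 - 1))) \<longrightarrow>
           exp (log_stoch_growth M Aenv \<tau> z0) > 1 \<and>
           (AE \<omega> in M. filterlim (\<lambda>t. norm1 (pop Aenv \<tau> z0 t \<omega>)) at_top sequentially))"
proof -
  note A = assms
  interpret prob_space M by (rule A(10))
  interpret P: les_prob f F s \<Delta> M \<tau> \<pi>1
    by unfold_locales (use A in auto)
  have Aenv_eq: "Aenv = P.Aen" by (simp add: Aenv_def P.Aen_def)
  have sr: "spec_rad (leslie2 f F s) = (f + sqrt (f\<^sup>2 + 4 * s * F)) / 2"
    by (rule spec_rad_leslie) (use A in auto)
  have srl: "spec_rad (leslie2 f F s) = P.lam" unfolding sr P.lam_def ..
  obtain L where AEL: "AE \<omega> in M. (\<lambda>t. ln (norm1 (pop P.Aen \<tau> z0 t \<omega>)) / real t) \<longlonglongrightarrow> L"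
    and Lb: "L \<ge> ln P.lam + (1 - \<pi>1) * ln P.cc"
    using P.main_lim[OF A(14) A(15)] by blast
  have lsg: "log_stoch_growth M Aenv \<tau> z0 = L"
    unfolding log_stoch_growth_def Aenv_eq
  proof (rule the_equality)
    show "AE \<omega> in M. (\<lambda>t. ln (norm1 (pop P.Aen \<tau> z0 t \<omega>)) / real t) \<longlonglongrightarrow> L" by (rule AEL)
    fix L' assume "AE \<omega> in M. (\<lambda>t. ln (norm1 (pop P.Aen \<tau> z0 t \<omega>)) / real t) \<longlonglongrightarrow> L'"
    with AEL have "AE \<omega> in M. (\<lambda>t. ln (norm1 (pop P.Aen \<tau> z0 t \<omega>)) / real t) \<longlonglongrightarrow> L' \<and>
        (\<lambda>t. ln (norm1 (pop P.Aen \<tau> z0 t \<omega>)) / real t) \<longlonglongrightarrow> L" by auto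
    from AE_ex[OF this] obtain \<omega> where
      "(\<lambda>t. ln (norm1 (pop P.Aen \<tau> z0 t \<omega>)) / real t) \<longlonglongrightarrow> L'"
      "(\<lambda>t. ln (norm1 (pop P.Aen \<tau> z0 t \<omega>)) / real t) \<longlonglongrightarrow> L" by blast
    then show "L' = L" by (rule LIMSEQ_unique)
  qed
  have part1: "log_stoch_growth M Aenv \<tau> z0 \<ge> ln (spec_rad (leslie2 f F s)) + (1 - \<pi>1) * ln (1 - \<Delta> / F)"
    using Lb unfolding lsg srl P.cc_def .
  have part3: "exp (log_stoch_growth M Aenv \<tau> z0) > 1 \<and>
           (AE \<omega> in M. filterlim (\<lambda>t. norm1 (pop Aenv \<tau> z0 t \<omega>)) at_top sequentially)"
    if hyp: "\<Delta> < F * (1 - spec_rad (leslie2 f F s) powr (1 / (\<pi>1 - 1)))"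
  proof -
    define Q where "Q = P.lam powr (1 / (\<pi>1 - 1))"
    have lam0: "P.lam > 0" by (rule P.lam_facts(1))
    have Q0: "Q > 0" unfolding Q_def using lam0 by simp
    have "\<Delta> / F < 1 - Q" using hyp A(2) unfolding srl Q_def by (simp add: divide_less_eq mult.commute)
    then have cQ: "Q < P.cc" unfolding P.cc_def by simp
    have "ln Q < ln P.cc" using cQ Q0 by simp
    moreover have "ln Q = (1 / (\<pi>1 - 1)) * ln P.lam" unfolding Q_def using lam0 by (simp add: ln_powr)
    ultimately have "(1 - \<pi>1) * ((1 / (\<pi>1 - 1)) * ln P.lam) < (1 - \<pi>1) * ln P.cc"
      using A(9) by (intro mult_strict_left_mono) auto
    moreover have "(1 - \<pi>1) * ((1 / (\<pi>1 - 1)) * ln P.lam) = - ln P.lam"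
      using A(9) by (simp add: field_simps)
    ultimately have pos: "ln P.lam + (1 - \<pi>1) * ln P.cc > 0" by linarith
    then have Lpos: "L > 0" using Lb by linarith
    have "exp L > 1" using Lpos by simp
    moreover have "AE \<omega> in M. filterlim (\<lambda>t. norm1 (pop P.Aen \<tau> z0 t \<omega>)) at_top sequentially"
      using AEL
    proof (rule AE_mp, intro AE_I2 impI)
      fix \<omega> assume g: "(\<lambda>t. ln (norm1 (pop P.Aen \<tau> z0 t \<omega>)) / real t) \<longlonglongrightarrow> L"
      have "filterlim (\<lambda>t. ln (norm1 (pop P.Aen \<tau> z0 t \<omega>)) / real t * real t) at_top sequentially"
        by (rule filterlim_tendsto_pos_mult_at_top[OF g Lpos filterlim_real_sequentially])
      then have "filterlim (\<lambda>t. exp (ln (norm1 (pop P.Aen \<tau> z0 t \<omega>)) / real t * real t)) at_top sequentially"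
        by (rule filterlim_compose[OF exp_at_top])
      moreover have ev: "eventually (\<lambda>t. exp (ln (norm1 (pop P.Aen \<tau> z0 t \<omega>)) / real t * real t) = norm1 (pop P.Aen \<tau> z0 t \<omega>)) sequentially"
        using eventually_ge_at_top[of 1]
      proof eventually_elim
        fix t :: nat assume t: "t \<ge> 1"
        have "norm1 (pop P.Aen \<tau> z0 t \<omega>) > 0" by (rule P.norm_pos[OF A(14) A(15) t])
        then show "exp (ln (norm1 (pop P.Aen \<tau> z0 t \<omega>)) / real t * real t) = norm1 (pop P.Aen \<tau> z0 t \<omega>)"
          using t by simp
      qed
      ultimately show "filterlim (\<lambda>t. norm1 (pop P.Aen \<tau> z0 t \<omega>)) at_top sequentially"
        using filterlim_cong[OF refl refl ev] by blast
    qed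
    moreover have lsg': "log_stoch_growth M P.Aen \<tau> z0 = L" using lsg Aenv_eq by simp
    ultimately show ?thesis unfolding Aenv_eq lsg' by simp
  qed
  show ?thesis using part1 sr part3 by blast
qed


end
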